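(* Let $n\ge1$, let $0<x_1<x_2<\dots<x_{n+1}<1$, and let $A$ be the $(n+1)\times(n+1)$ Bernstein–Vandermonde matrix, $a_{r,c}=\binom{n}{c-1}x_r^{\,c-1}(1-x_r)^{n-c+1}$. Then all pivots of the Neville elimination of $A^T$ are nonzero, and its multipliers $\widetilde m_{i,j}$ satisfy, for $1\le j\le n$ and $j+1\le i\le n+1$, $$\widetilde m_{i,j}=\frac{(n-i+2)\,x_j}{(i-1)(1-x_j)}.$$
   Context: Neville elimination of a nonsingular $N\times N$ matrix $M$: set $M_1=M$ and, for $t=1,\dots,N-1$, obtain $M_{t+1}=(a^{(t+1)}_{i,j})$ from $M_t=(a^{(t)}_{i,j})$ by $a^{(t+1)}_{i,j}=a^{(t)}_{i,j}$ if $i\le t$; $a^{(t+1)}_{i,j}=a^{(t)}_{i,j}-\big(a^{(t)}_{i,t}/a^{(t)}_{i-1,t}\big)a^{(t)}_{i-1,j}$ if $i\ge t+1$ and $j\ge t+1$; and $a^{(t+1)}_{i,j}=0$ otherwise. The pivot $(i,j)$ is $p_{i,j}=a^{(j)}_{i,j}$ for $1\le j\le i\le N$, and the multiplier is $p_{i,j}/p_{i-1,j}$ for $j<i$. Here $\widetilde m_{i,j}$ denotes the multipliers of the Neville elimination applied to $A^T$. *)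

theory Defs
  imports Complex_Main
begin

text \<open>Matrices are functions nat => nat => real, indices 1-based (rows i, columns j in 1..N).\<close>

definition nev_step :: "(nat \<Rightarrow> nat \<Rightarrow> real) \<Rightarrow> nat \<Rightarrow> (nat \<Rightarrow> nat \<Rightarrow> real)" where
  "nev_step M t = (\<lambda>i j. if i \<le> t then M i j
      else if t + 1 \<le> j then M i j - (M i t / M (i - 1) t) * M (i - 1) j
      else 0)"

text \<open>nev_mat M k is the matrix M_(k+1) of the Neville elimination (M_1 = M).\<close>
primrec nev_mat :: "(nat \<Rightarrow> nat \<Rightarrow> real) \<Rightarrow> nat \<Rightarrow> (nat \<Rightarrow> nat \<Rightarrow> real)" where
  "nev_mat M 0 = M"
| "nev_mat M (Suc t) = nev_step (nev_mat M t) (Suc t)"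

text \<open>pivot (i,j) = a^(j)_(i,j), i.e. entry (i,j) of M_j.\<close>
definition nev_pivot :: "(nat \<Rightarrow> nat \<Rightarrow> real) \<Rightarrow> nat \<Rightarrow> nat \<Rightarrow> real" where
  "nev_pivot M i j = nev_mat M (j - 1) i j"

definition nev_mult :: "(nat \<Rightarrow> nat \<Rightarrow> real) \<Rightarrow> nat \<Rightarrow> nat \<Rightarrow> real" where
  "nev_mult M i j = nev_pivot M i j / nev_pivot M (i - 1) j"

definition transp_mat :: "(nat \<Rightarrow> nat \<Rightarrow> real) \<Rightarrow> (nat \<Rightarrow> nat \<Rightarrow> real)" where
  "transp_mat M = (\<lambda>i j. M j i)"

definition bv_mat :: "nat \<Rightarrow> (nat \<Rightarrow> real) \<Rightarrow> (nat \<Rightarrow> nat \<Rightarrow> real)" where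
  "bv_mat n x = (\<lambda>r c. real (n choose (c - 1)) * x r ^ (c - 1) * (1 - x r) ^ (n + 1 - c))"

end

theory Submission
  imports Defs
begin

definition FF :: "nat \<Rightarrow> (nat \<Rightarrow> real) \<Rightarrow> nat \<Rightarrow> nat \<Rightarrow> nat \<Rightarrow> real" where
  "FF n x k i j = real (n choose (i - 1)) * x j ^ (i - 1 - k) * (1 - x j) ^ (n + 1 - i)
     * (\<Prod>l\<in>{1..k}. (x j - x l) / (1 - x l))"

lemma binom_ratio: "real (Suc k) * real (n choose Suc k) = real (n - k) * real (n choose k)"
proof -
  have "Suc k * (n choose Suc k) = (n - k) * (n choose k)"
    using binomial_absorption[of k n] binomial_absorb_comp[of n k] by simp
  then show ?thesis by (metis of_nat_mult)
qed

lemma prod_nz: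
  fixes n k j :: nat and x :: "nat \<Rightarrow> real"
  assumes mono: "\<And>l j. 1 \<le> l \<Longrightarrow> l < j \<Longrightarrow> j \<le> n + 1 \<Longrightarrow> x l < x j"
    and pos: "\<And>l. 1 \<le> l \<Longrightarrow> l \<le> n + 1 \<Longrightarrow> 0 < x l \<and> x l < 1"
    and "k < j" "j \<le> n + 1"
  shows "(\<Prod>l\<in>{1..k}. (x j - x l) / (1 - x l)) \<noteq> 0"
proof -
  have "\<forall>l\<in>{1..k}. (x j - x l) / (1 - x l) \<noteq> 0"
  proof
    fix l assume l: "l \<in> {1..k}"
    have "l < j" using l assms(3) by auto
    then have "x l < x j" using mono l assms(4) by auto
    moreover have "x l < 1" using pos[of l] l assms(3,4) by auto
    ultimately show "(x j - x l) / (1 - x l) \<noteq> 0" by simp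
  qed
  then show ?thesis by simp
qed

lemma main:
  fixes n k i j :: nat and x :: "nat \<Rightarrow> real"
  assumes mono: "\<And>l j. 1 \<le> l \<Longrightarrow> l < j \<Longrightarrow> j \<le> n + 1 \<Longrightarrow> x l < x j"
    and pos: "\<And>l. 1 \<le> l \<Longrightarrow> l \<le> n + 1 \<Longrightarrow> 0 < x l \<and> x l < 1"
  shows "k \<le> n \<Longrightarrow> k + 1 \<le> i \<Longrightarrow> i \<le> n + 1 \<Longrightarrow> k + 1 \<le> j \<Longrightarrow> j \<le> n + 1 \<Longrightarrow>
     nev_mat (transp_mat (bv_mat n x)) k i j = FF n x k i j"
proof (induction k arbitrary: i j)
  case 0
  then show ?case by (simp add: FF_def transp_mat_def bv_mat_def)
next
  case (Suc k)
  define M where "M = nev_mat (transp_mat (bv_mat n x)) k"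
  define t where "t = Suc k"
  have ij: "\<not> i \<le> Suc k" "Suc k + 1 \<le> j" using Suc.prems by auto
  have eq: "nev_mat (transp_mat (bv_mat n x)) (Suc k) i j = M i j - (M i t / M (i - 1) t) * M (i - 1) j"
    using ij by (simp add: nev_step_def M_def t_def)
  have e1: "M i j = FF n x k i j" using Suc M_def by auto
  have e2: "M (i - 1) j = FF n x k (i - 1) j" using Suc M_def by auto
  have e3: "M i t = FF n x k i t" using Suc M_def t_def by auto
  have e4: "M (i - 1) t = FF n x k (i - 1) t" using Suc M_def t_def by auto
  obtain a where a: "i = k + 2 + a" using le_Suc_ex[of "k + 2" i] Suc.prems by auto
  obtain b where b: "n + 1 = i + b" using le_Suc_ex[of i "n + 1"] Suc.prems by auto
  define c1 where "c1 = real (n choose (k + 1 + a))"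
  define c0 where "c0 = real (n choose (k + a))"
  have c0: "c0 \<noteq> 0" unfolding c0_def using a b by simp
  define Pj where "Pj = (\<Prod>l\<in>{1..k}. (x j - x l) / (1 - x l))"
  define Pt where "Pt = (\<Prod>l\<in>{1..k}. (x t - x l) / (1 - x l))"
  have Pt: "Pt \<noteq> 0" unfolding Pt_def using prod_nz[where n=n and x=x, OF mono pos, where k=k and j=t] Suc.prems t_def by auto
  have xt: "0 < x t" "x t < 1" using pos[of t] Suc.prems t_def by auto
  have Pj': "(\<Prod>l\<in>{1..Suc k}. (x j - x l) / (1 - x l)) = Pj * ((x j - x t) / (1 - x t))"
    unfolding Pj_def t_def by simp
  have f1: "FF n x k i j = c1 * x j ^ Suc a * (1 - x j) ^ b * Pj"
    unfolding FF_def c1_def Pj_def using a b by (simp add: eval_nat_numeral)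
  have f2: "FF n x k (i - 1) j = c0 * x j ^ a * (1 - x j) ^ Suc b * Pj"
    unfolding FF_def c0_def Pj_def using a b by (simp add: eval_nat_numeral)
  have f3: "FF n x k i t = c1 * x t ^ Suc a * (1 - x t) ^ b * Pt"
    unfolding FF_def c1_def Pt_def using a b by (simp add: eval_nat_numeral)
  have f4: "FF n x k (i - 1) t = c0 * x t ^ a * (1 - x t) ^ Suc b * Pt"
    unfolding FF_def c0_def Pt_def using a b by (simp add: eval_nat_numeral)
  have f5: "FF n x (Suc k) i j = c1 * x j ^ a * (1 - x j) ^ b * (Pj * ((x j - x t) / (1 - x t)))"
    unfolding FF_def c1_def using a b Pj' by (simp add: eval_nat_numeral)
  define u where "u = x t ^ a * (1 - x t) ^ b * Pt"
  have u: "u \<noteq> 0" unfolding u_def using Pt xt by simp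
  define v where "v = x j ^ a * (1 - x j) ^ b * Pj"
  have g3: "M i t = (c1 * x t) * u" unfolding e3 f3 u_def by (simp add: mult_ac)
  have g4: "M (i - 1) t = (c0 * (1 - x t)) * u" unfolding e4 f4 u_def by (simp add: mult_ac)
  have g1: "M i j = (c1 * x j) * v" unfolding e1 f1 v_def by (simp add: mult_ac)
  have g2: "M (i - 1) j = (c0 * (1 - x j)) * v" unfolding e2 f2 v_def by (simp add: mult_ac)
  have g5: "FF n x (Suc k) i j = c1 * v * ((x j - x t) / (1 - x t))" unfolding f5 v_def by (simp add: mult_ac)
  have r: "M i t / M (i - 1) t = c1 * x t / (c0 * (1 - x t))"
    unfolding g3 g4 using u by simp
  have alg: "c1 * x j * v - c1 * x t / (c0 * (1 - x t)) * (c0 * (1 - x j) * v)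
      = c1 * v * ((x j - x t) / (1 - x t))"
    if "c0 \<noteq> 0" "1 - x t \<noteq> 0" for c0 c1 v :: real
    using that by (simp add: field_simps)
  show ?case
    unfolding eq r g1 g2 g5 using alg c0 xt by simp
qed

theorem mainTheorem6:
  fixes n :: nat and x :: "nat \<Rightarrow> real"
  assumes "n \<ge> 1"
    and "0 < x 1"
    and "\<forall>i. 1 \<le> i \<and> i \<le> n \<longrightarrow> x i < x (i + 1)"
    and "x (n + 1) < 1"
  shows "(\<forall>i j. 1 \<le> j \<and> j \<le> i \<and> i \<le> n + 1 \<longrightarrow>
            nev_pivot (transp_mat (bv_mat n x)) i j \<noteq> 0)
       \<and> (\<forall>i j. 1 \<le> j \<and> j \<le> n \<and> j + 1 \<le> i \<and> i \<le> n + 1 \<longrightarrow>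
            nev_mult (transp_mat (bv_mat n x)) i j
              = (real n - real i + 2) * x j / ((real i - 1) * (1 - x j)))"
proof -
  have mono: "x l < x j" if "1 \<le> l" "l < j" "j \<le> n + 1" for l j
    using that
  proof (induction j)
    case 0 then show ?case by simp
  next
    case (Suc j)
    have s: "x j < x (j + 1)" using assms(3) Suc.prems by auto
    show ?case
    proof (cases "l = j")
      case True then show ?thesis using s by simp
    next
      case False then show ?thesis using Suc s by auto
    qed
  qed
  have pos: "0 < x l \<and> x l < 1" if "1 \<le> l" "l \<le> n + 1" for l
  proof
    show "0 < x l"
      using mono[of 1 l] that assms(2) by (cases "l = 1") auto
    show "x l < 1"
      using mono[of l "n+1"] that assms(4) by (cases "l = n + 1") auto
  qed
  have piv: "nev_pivot (transp_mat (bv_mat n x)) i j = FF n x (j - 1) i j"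
    if "1 \<le> j" "j \<le> i" "i \<le> n + 1" for i j
    unfolding nev_pivot_def using main[where n=n and x=x, OF mono pos, where k="j - 1" and i=i and j=j] that by auto
  show ?thesis
  proof (intro conjI allI impI)
    fix i j assume h: "1 \<le> j \<and> j \<le> i \<and> i \<le> n + 1"
    have P: "(\<Prod>l\<in>{1..j-1}. (x j - x l) / (1 - x l)) \<noteq> 0"
      using prod_nz[where n=n and x=x, OF mono pos, where k="j - 1" and j=j] h by auto
    have "i - 1 \<le> n" using h by arith
    then have c: "real (n choose (i - 1)) \<noteq> 0" by simp
    have xj: "0 < x j" "x j < 1" using pos[of j] h by auto
    have e: "nev_pivot (transp_mat (bv_mat n x)) i j = FF n x (j - 1) i j"
      using piv h by blast
    show "nev_pivot (transp_mat (bv_mat n x)) i j \<noteq> 0"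
      unfolding e FF_def using P c xj by simp
  next
    fix i j assume h: "1 \<le> j \<and> j \<le> n \<and> j + 1 \<le> i \<and> i \<le> n + 1"
    define P where "P = (\<Prod>l\<in>{1..j-1}. (x j - x l) / (1 - x l))"
    have P: "P \<noteq> 0" unfolding P_def
      using prod_nz[where n=n and x=x, OF mono pos, where k="j - 1" and j=j] h by auto
    have xj: "0 < x j" "x j < 1" using pos[of j] h by auto
    obtain a where a: "i = j + 1 + a" using le_Suc_ex[of "j + 1" i] h by auto
    obtain b where b: "n + 1 = i + b" using le_Suc_ex[of i "n + 1"] h by auto
    define c1 where "c1 = real (n choose (j + a))"
    define c0 where "c0 = real (n choose (j - 1 + a))"
    have c0: "c0 \<noteq> 0" unfolding c0_def using a b h by simp
    have bin: "real (j + a) * c1 = real (n - (j - 1 + a)) * c0"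
      unfolding c1_def c0_def using binom_ratio[of "j - 1 + a" n] h by simp
    have p1: "nev_pivot (transp_mat (bv_mat n x)) i j = c1 * x j ^ Suc a * (1 - x j) ^ b * P"
    proof -
      have "nev_pivot (transp_mat (bv_mat n x)) i j = FF n x (j - 1) i j" using piv h by auto
      then show ?thesis using h a b unfolding FF_def c1_def P_def by (simp add: Suc_diff_le)
    qed
    have p2: "nev_pivot (transp_mat (bv_mat n x)) (i - 1) j = c0 * x j ^ a * (1 - x j) ^ Suc b * P"
    proof -
      have "nev_pivot (transp_mat (bv_mat n x)) (i - 1) j = FF n x (j - 1) (i - 1) j" using piv h by auto
      then show ?thesis using h a b unfolding FF_def c0_def P_def by (simp add: Suc_diff_le)
    qed
    have nn: "real (n - (j - 1 + a)) = real n - real i + 2" using a b h by simp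
    have ii: "real (j + a) = real i - 1" using a by simp
    have ipos: "real i - 1 > 0" using h by simp
    show "nev_mult (transp_mat (bv_mat n x)) i j
              = (real n - real i + 2) * x j / ((real i - 1) * (1 - x j))"
    proof -
      have c1eq: "c1 = (real n - real i + 2) * c0 / (real i - 1)"
        using bin ipos unfolding nn ii by (simp add: field_simps)
      define w where "w = x j ^ a * (1 - x j) ^ b * P"
      have w: "w \<noteq> 0" unfolding w_def using P xj by simp
      have q1: "nev_pivot (transp_mat (bv_mat n x)) i j = (c1 * x j) * w"
        unfolding p1 w_def by (simp add: mult_ac)
      have q2: "nev_pivot (transp_mat (bv_mat n x)) (i - 1) j = (c0 * (1 - x j)) * w"
        unfolding p2 w_def by (simp add: mult_ac)
      have alg: "N * c0 / d * y / (c0 * e) = N * y / (d * e)"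
        if "c0 \<noteq> 0" "d \<noteq> 0" "e \<noteq> 0" for N d e c0 y :: real
        using that by (simp add: field_simps)
      have "nev_mult (transp_mat (bv_mat n x)) i j = c1 * x j / (c0 * (1 - x j))"
        unfolding nev_mult_def q1 q2 using w by simp
      also have "\<dots> = (real n - real i + 2) * x j / ((real i - 1) * (1 - x j))"
        unfolding c1eq using alg[of c0 "real i - 1" "1 - x j" "real n - real i + 2" "x j"] c0 ipos xj by simp
      finally show ?thesis .
    qed
  qed
qed

end
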